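(* Let $\eta\in\mathcal D$. Then for every $x_0\in\mathbb U$ the negative gradient flow $\dot x(t)=-\nabla\eta(x(t))$, $x(0)=x_0$, has a unique global solution and $x(t)\in\mathbb U$ for all $t\ge0$.
   Context: Let $\zeta_{\min}>0$, $\beta\ge2$ an integer, $y_1,\dots,y_N\in\mathbb R^D$. $\mathbb U:=\bigcup_{i=1}^NB(y_i,\zeta_{\min}/2)$ (open Euclidean balls). For $x\in\partial\mathbb U$, $\vec n(x):=\{(x-y_i)/\|x-y_i\|:\|x-y_i\|=\zeta_{\min}/2\}$. $\mathcal D$ is the set of $\eta\in C^\beta(\overline{\mathbb U})$ with $\|\nabla\eta(x)\|^2=2\eta(x)$ for all $x\in\mathbb U$, and such that there is $\delta>0$ with $\langle\nabla\eta(x),n\rangle>\delta$ for all $x\in\partial\mathbb U$, $n\in\vec n(x)$. *)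

theory Defs
  imports "HOL-Analysis.Analysis"
begin

definition ballunion :: "real \<Rightarrow> nat \<Rightarrow> (nat \<Rightarrow> 'a::euclidean_space) \<Rightarrow> 'a set" where
  "ballunion \<zeta> N ys = (\<Union>i\<in>{1..N}. ball (ys i) (\<zeta> / 2))"

text \<open>F vs is the iterated partial derivative along the directions in vs, F (b # vs) being the
partial derivative in direction b of F vs.\<close>
definition Ck_closure :: "nat \<Rightarrow> 'a::euclidean_space set \<Rightarrow> ('a \<Rightarrow> real) \<Rightarrow> bool" where
  "Ck_closure k U f \<longleftrightarrow> (\<exists>F :: 'a list \<Rightarrow> 'a \<Rightarrow> real.
      (\<forall>x\<in>closure U. F [] x = f x) \<and>
      (\<forall>vs. set vs \<subseteq> Basis \<and> length vs \<le> k \<longrightarrow> continuous_on (closure U) (F vs)) \<and>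
      (\<forall>vs. set vs \<subseteq> Basis \<and> length vs < k \<longrightarrow>
         (\<forall>x\<in>U. (F vs has_derivative (\<lambda>h. \<Sum>b\<in>Basis. (h \<bullet> b) * F (b # vs) x)) (at x))))"

definition grad :: "('a::euclidean_space \<Rightarrow> real) \<Rightarrow> 'a \<Rightarrow> 'a" where
  "grad f x = (SOME g. (f has_derivative (\<lambda>h. g \<bullet> h)) (at x))"

text \<open>Gradient on the closure of U: the continuous extension from U.  For x in the open
set U this is just grad f x (when f is C^1).\<close>
definition ext_grad :: "'a::euclidean_space set \<Rightarrow> ('a \<Rightarrow> real) \<Rightarrow> 'a \<Rightarrow> 'a" where
  "ext_grad U f x = Lim (at x within U) (grad f)"

definition classD :: "real \<Rightarrow> nat \<Rightarrow> nat \<Rightarrow> (nat \<Rightarrow> 'a::euclidean_space) \<Rightarrow> ('a \<Rightarrow> real) \<Rightarrow> bool" where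
  "classD \<zeta> \<beta> N ys \<eta> \<longleftrightarrow>
     Ck_closure \<beta> (ballunion \<zeta> N ys) \<eta> \<and>
     (\<forall>x\<in>ballunion \<zeta> N ys. (norm (ext_grad (ballunion \<zeta> N ys) \<eta> x))\<^sup>2 = 2 * \<eta> x) \<and>
     (\<exists>\<delta>>0. \<forall>x\<in>frontier (ballunion \<zeta> N ys). \<forall>i\<in>{1..N}. dist x (ys i) = \<zeta> / 2 \<longrightarrow>
         ext_grad (ballunion \<zeta> N ys) \<eta> x \<bullet> ((x - ys i) /\<^sub>R norm (x - ys i)) > \<delta>)"

definition neg_grad_flow_sol ::
  "'a::euclidean_space set \<Rightarrow> ('a \<Rightarrow> real) \<Rightarrow> 'a \<Rightarrow> (real \<Rightarrow> 'a) \<Rightarrow> bool" where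
  "neg_grad_flow_sol U \<eta> x0 x \<longleftrightarrow> x 0 = x0 \<and>
     (\<forall>t\<ge>0. x t \<in> closure U \<and>
        (x has_vector_derivative - ext_grad U \<eta> (x t)) (at t within {0..}))"

end

theory Submission
  imports Defs
begin



lemma gronwall0:
  fixes v v' :: "real \<Rightarrow> 'a::real_inner"
  assumes "0 \<le> t1" and C: "C \<ge> 0"
    and d: "\<And>t. t\<in>{0..t1} \<Longrightarrow> (v has_vector_derivative v' t) (at t)"
    and b: "\<And>t. t\<in>{0..t1} \<Longrightarrow> norm (v' t) \<le> C * norm (v t)"
    and "v 0 = 0"
  shows "\<forall>t\<in>{0..t1}. v t = 0"
proof
  fix t assume t: "t \<in> {0..t1}"
  define f where "f s = exp (- 2 * C * s) * (v s \<bullet> v s)" for s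
  have "f t \<le> f 0"
  proof (rule DERIV_nonpos_imp_nonincreasing[of 0 t f])
    show "0 \<le> t" using t by auto
    fix s assume s: "0 \<le> s" "s \<le> t"
    then have s1: "s \<in> {0..t1}" using t by auto
    have dv: "(v has_derivative (\<lambda>h. h *\<^sub>R v' s)) (at s)"
      using d[OF s1] by (simp add: has_vector_derivative_def)
    have "(f has_derivative (\<lambda>h. exp (- 2 * C * s) * (v s \<bullet> (h *\<^sub>R v' s) + (h *\<^sub>R v' s) \<bullet> v s)
          + (h * (- 2 * C) * exp (- 2 * C * s)) * (v s \<bullet> v s))) (at s)"
      unfolding f_def
      by (auto intro!: derivative_eq_intros dv)
    then have "(f has_real_derivative (exp (- 2 * C * s) * (2 * (v s \<bullet> v' s) - 2 * C * (v s \<bullet> v s)))) (at s)"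
      unfolding has_field_derivative_def
      by (auto elim!: has_derivative_eq_rhs simp: algebra_simps inner_commute)
    moreover have "v s \<bullet> v' s \<le> C * (v s \<bullet> v s)"
    proof -
      have "v s \<bullet> v' s \<le> norm (v s) * norm (v' s)" by (rule norm_cauchy_schwarz)
      also have "\<dots> \<le> norm (v s) * (C * norm (v s))" by (rule mult_left_mono[OF b[OF s1]]) simp
      also have "\<dots> = C * (v s \<bullet> v s)" by (simp add: power2_norm_eq_inner[symmetric] power2_eq_square)
      finally show ?thesis .
    qed
    ultimately show "\<exists>y. (f has_real_derivative y) (at s) \<and> y \<le> 0"
      by (intro exI[of _ "exp (- 2 * C * s) * (2 * (v s \<bullet> v' s) - 2 * C * (v s \<bullet> v s))"])
        (auto intro!: mult_nonneg_nonpos)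
  qed
  then have "exp (- 2 * C * t) * (v t \<bullet> v t) \<le> 0" using assms(5) by (simp add: f_def)
  then have "v t \<bullet> v t \<le> 0" by (simp add: mult_le_0_iff)
  then show "v t = 0" using inner_ge_zero[of "v t"] by simp
qed



lemma hess_sym_aux:
  fixes \<eta> :: "'a::euclidean_space \<Rightarrow> real" and gr D :: "'a \<Rightarrow> 'a"
  assumes deta: "\<And>p. p \<in> U \<Longrightarrow> (\<eta> has_derivative (\<lambda>h. gr p \<bullet> h)) (at p)"
    and lin: "linear D"
    and dd: "\<And>y. norm (y - q) < d \<Longrightarrow> norm (gr y - gr q - D (y - q)) \<le> e * norm (y - q)"
    and ball: "ball q r \<subseteq> U"
    and t: "0 < t" "t * (norm a + norm b) < d" "t * (norm a + norm b) < r"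
    and e: "e \<ge> 0"
  shows "\<bar>\<eta> (q + t *\<^sub>R a + t *\<^sub>R b) - \<eta> (q + t *\<^sub>R b) - \<eta> (q + t *\<^sub>R a) + \<eta> q - t^2 * (b \<bullet> D a)\<bar>
      \<le> 2 * e * t^2 * norm b * (norm a + norm b)"
proof -
  define P1 where "P1 s = q + t *\<^sub>R a + s *\<^sub>R (t *\<^sub>R b)" for s
  define P2 where "P2 s = q + s *\<^sub>R (t *\<^sub>R b)" for s
  define \<phi> where "\<phi> s = \<eta> (P1 s) - \<eta> (P2 s)" for s
  define \<phi>' where "\<phi>' s = gr (P1 s) \<bullet> (t *\<^sub>R b) - gr (P2 s) \<bullet> (t *\<^sub>R b)" for s
  have nP1: "norm (P1 s - q) \<le> t * (norm a + norm b)" if "s \<in> {0..1}" for s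
  proof -
    have "norm (P1 s - q) = norm (t *\<^sub>R a + (s * t) *\<^sub>R b)" by (simp add: P1_def)
    also have "\<dots> \<le> norm (t *\<^sub>R a) + norm ((s * t) *\<^sub>R b)" by (rule norm_triangle_ineq)
    also have "\<dots> \<le> t * norm a + t * norm b"
      using that t(1) by (auto simp: abs_mult intro!: mult_right_le_one_le mult_left_le_one_le mult_right_mono)
    finally show ?thesis by (simp add: algebra_simps)
  qed
  have nP2: "norm (P2 s - q) \<le> t * norm b" if "s \<in> {0..1}" for s
    using that t(1) by (auto simp: P2_def abs_mult intro!: mult_left_le_one_le mult_right_mono)
  have nb: "t * norm b \<le> t * (norm a + norm b)" using t(1) by auto
  have inU: "P1 s \<in> U" "P2 s \<in> U" if "s \<in> {0..1}" for s
  proof -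
    have "P1 s \<in> ball q r" using nP1[OF that] t by (auto simp: dist_norm norm_minus_commute)
    then show "P1 s \<in> U" using ball by blast
    have "norm (P2 s - q) < r" using nP2[OF that] nb t(3) by linarith
    then have "P2 s \<in> ball q r" by (auto simp: dist_norm norm_minus_commute)
    then show "P2 s \<in> U" using ball by blast
  qed
  have der: "(\<phi> has_real_derivative \<phi>' s) (at s)" if "s \<in> {0..1}" for s
  proof -
    have "((\<lambda>s. P1 s) has_derivative (\<lambda>h. h *\<^sub>R (t *\<^sub>R b))) (at s)"
      unfolding P1_def by (auto intro!: derivative_eq_intros)
    from has_derivative_compose[OF this deta[OF inU(1)[OF that]]]
    have 1: "((\<lambda>s. \<eta> (P1 s)) has_derivative (\<lambda>h. gr (P1 s) \<bullet> (h *\<^sub>R (t *\<^sub>R b)))) (at s)" .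
    have "((\<lambda>s. P2 s) has_derivative (\<lambda>h. h *\<^sub>R (t *\<^sub>R b))) (at s)"
      unfolding P2_def by (auto intro!: derivative_eq_intros)
    from has_derivative_compose[OF this deta[OF inU(2)[OF that]]]
    have 2: "((\<lambda>s. \<eta> (P2 s)) has_derivative (\<lambda>h. gr (P2 s) \<bullet> (h *\<^sub>R (t *\<^sub>R b)))) (at s)" .
    have "(\<phi> has_derivative (\<lambda>h. gr (P1 s) \<bullet> (h *\<^sub>R (t *\<^sub>R b)) - gr (P2 s) \<bullet> (h *\<^sub>R (t *\<^sub>R b)))) (at s)"
      unfolding \<phi>_def by (rule has_derivative_diff[OF 1 2])
    then show ?thesis unfolding has_field_derivative_def \<phi>'_def
      by (rule has_derivative_eq_rhs) (auto simp: algebra_simps)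
  qed
  obtain z where z: "0 < z" "z < 1" "\<phi> 1 - \<phi> 0 = (1 - 0) * \<phi>' z"
    using MVT2[of 0 1 \<phi> \<phi>'] der by auto
  have z01: "z \<in> {0..1}" using z by auto
  have lhs: "\<eta> (q + t *\<^sub>R a + t *\<^sub>R b) - \<eta> (q + t *\<^sub>R b) - \<eta> (q + t *\<^sub>R a) + \<eta> q = \<phi>' z"
    using z(3) by (simp add: \<phi>_def P1_def P2_def)
  have lD: "D (P1 z - q) - D (P2 z - q) = t *\<^sub>R D a"
  proof -
    have "P1 z - q = t *\<^sub>R a + (P2 z - q)" by (simp add: P1_def P2_def)
    then have "D (P1 z - q) = D (t *\<^sub>R a) + D (P2 z - q)" by (simp only: linear_add[OF lin])
    then show ?thesis using linear_scale[OF lin] by simp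
  qed
  have "\<phi>' z - t^2 * (b \<bullet> D a) = (t *\<^sub>R b) \<bullet> ((gr (P1 z) - gr q - D (P1 z - q)) - (gr (P2 z) - gr q - D (P2 z - q)))"
    unfolding \<phi>'_def using lD
    by (simp add: algebra_simps inner_diff_right inner_commute power2_eq_square)
  also have "\<bar>\<dots>\<bar> \<le> norm (t *\<^sub>R b) * norm ((gr (P1 z) - gr q - D (P1 z - q)) - (gr (P2 z) - gr q - D (P2 z - q)))"
    by (rule Cauchy_Schwarz_ineq2)
  also have "\<dots> \<le> (t * norm b) * (e * (t * (norm a + norm b)) + e * (t * (norm a + norm b)))"
  proof (rule mult_mono)
    show "norm (t *\<^sub>R b) \<le> t * norm b" using t(1) by simp
    have a1: "norm (gr (P1 z) - gr q - D (P1 z - q)) \<le> e * (t * (norm a + norm b))"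
      using dd[of "P1 z"] nP1[OF z01] t e by (smt (verit) mult_left_mono)
    have a2: "norm (gr (P2 z) - gr q - D (P2 z - q)) \<le> e * (t * (norm a + norm b))"
      using dd[of "P2 z"] nP2[OF z01] t e nb by (smt (verit) mult_left_mono)
    show "norm ((gr (P1 z) - gr q - D (P1 z - q)) - (gr (P2 z) - gr q - D (P2 z - q)))
        \<le> e * (t * (norm a + norm b)) + e * (t * (norm a + norm b))"
      using norm_triangle_ineq4 a1 a2 by (smt (verit))
  qed (use t e in auto)
  also have "\<dots> = 2 * e * t^2 * norm b * (norm a + norm b)" by (simp add: power2_eq_square algebra_simps)
  finally show ?thesis using lhs by simp
qed

lemma hess_sym:
  fixes \<eta> :: "'a::euclidean_space \<Rightarrow> real" and gr D :: "'a \<Rightarrow> 'a"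
  assumes deta: "\<And>p. p \<in> U \<Longrightarrow> (\<eta> has_derivative (\<lambda>h. gr p \<bullet> h)) (at p)"
    and U: "open U" "q \<in> U"
    and dg: "(gr has_derivative D) (at q)"
  shows "a \<bullet> D b = b \<bullet> D a"
proof -
  have lin: "linear D" using dg has_derivative_linear by blast
  obtain r where r: "r > 0" "ball q r \<subseteq> U" using U open_contains_ball by blast
  define K where "K = 2 * (norm a + norm b + 1)^2"
  have K: "K > 0" unfolding K_def by (smt (verit) norm_ge_zero zero_less_power)
  have "\<bar>a \<bullet> D b - b \<bullet> D a\<bar> \<le> e * K" if e: "e > 0" for e
  proof -
    obtain d where d: "d > 0" "\<And>y. norm (y - q) < d \<Longrightarrow> norm (gr y - gr q - D (y - q)) \<le> e * norm (y - q)"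
      using dg e unfolding has_derivative_at_alt by blast
    define t where "t = min d r / (2 * (norm a + norm b + 1))"
    have t0: "t > 0" using d r unfolding t_def by (smt (verit) norm_ge_zero divide_pos_pos)
    have tl: "t * (norm a + norm b) < min d r"
    proof -
      have "t * (norm a + norm b) < t * (2 * (norm a + norm b + 1))"
        using t0 by (intro mult_strict_left_mono) (auto intro: add_pos_nonneg add_nonneg_pos, smt (verit) norm_ge_zero)
      also have "\<dots> = min d r" unfolding t_def by (smt (verit) norm_ge_zero nonzero_eq_divide_eq)
      finally show ?thesis .
    qed
    have A: "\<bar>\<eta> (q + t *\<^sub>R a + t *\<^sub>R b) - \<eta> (q + t *\<^sub>R b) - \<eta> (q + t *\<^sub>R a) + \<eta> q - t^2 * (b \<bullet> D a)\<bar>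
      \<le> 2 * e * t^2 * norm b * (norm a + norm b)"
      by (rule hess_sym_aux[OF deta lin d(2) r(2) t0]) (use tl e in auto)
    have B: "\<bar>\<eta> (q + t *\<^sub>R b + t *\<^sub>R a) - \<eta> (q + t *\<^sub>R a) - \<eta> (q + t *\<^sub>R b) + \<eta> q - t^2 * (a \<bullet> D b)\<bar>
      \<le> 2 * e * t^2 * norm a * (norm b + norm a)"
      by (rule hess_sym_aux[OF deta lin d(2) r(2) t0]) (use tl e in \<open>auto simp: add.commute\<close>)
    have sw: "q + t *\<^sub>R b + t *\<^sub>R a = q + t *\<^sub>R a + t *\<^sub>R b" by (simp add: algebra_simps)
    have "t^2 * \<bar>a \<bullet> D b - b \<bullet> D a\<bar> \<le> 2 * e * t^2 * norm b * (norm a + norm b) + 2 * e * t^2 * norm a * (norm b + norm a)"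
    proof -
      have "t^2 * \<bar>a \<bullet> D b - b \<bullet> D a\<bar> = \<bar>t^2 * (a \<bullet> D b) - t^2 * (b \<bullet> D a)\<bar>"
        by (simp add: abs_mult right_diff_distrib[symmetric])
      then show ?thesis using A B unfolding sw by linarith
    qed
    also have "\<dots> = t^2 * (2 * e * (norm a + norm b)^2)" by (simp add: power2_eq_square algebra_simps)
    also have "\<dots> \<le> t^2 * (e * K)"
      unfolding K_def using e by (intro mult_left_mono) (auto intro!: power_mono)
    finally show ?thesis using t0 by simp
  qed
  note hyp = this
  have "\<bar>a \<bullet> D b - b \<bullet> D a\<bar> \<le> 0"
  proof (rule ccontr)
    assume n: "\<not> \<bar>a \<bullet> D b - b \<bullet> D a\<bar> \<le> 0"
    have "\<bar>a \<bullet> D b - b \<bullet> D a\<bar> \<le> (\<bar>a \<bullet> D b - b \<bullet> D a\<bar> / (2 * K)) * K"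
      using n K by (intro hyp) auto
    also have "\<dots> = \<bar>a \<bullet> D b - b \<bullet> D a\<bar> / 2" using K by (simp add: field_simps)
    finally show False using n by (simp add: field_simps)
  qed
  then show ?thesis by simp
qed


lemma line_grad:
  fixes gr :: "'a::euclidean_space \<Rightarrow> 'a" and Dg :: "'a \<Rightarrow> 'a \<Rightarrow> 'a"
  assumes dgr: "\<And>q. q \<in> U \<Longrightarrow> (gr has_derivative Dg q) (at q)"
    and Dgg: "\<And>q. q \<in> U \<Longrightarrow> Dg q (gr q) = gr q"
    and bound: "\<And>K. compact K \<Longrightarrow> K \<subseteq> U \<Longrightarrow> \<exists>M\<ge>0. \<forall>q\<in>K. \<forall>h. norm (Dg q h) \<le> M * norm h"
    and t1: "0 \<le> t1"
    and inU: "\<And>t. t \<in> {0..t1} \<Longrightarrow> z - (1 - exp (- t)) *\<^sub>R gr z \<in> U"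
  shows "\<forall>t\<in>{0..t1}. gr (z - (1 - exp (- t)) *\<^sub>R gr z) = exp (- t) *\<^sub>R gr z"
proof -
  define gz where "gz = gr z"
  define xl where "xl t = z - (1 - exp (- t)) *\<^sub>R gz" for t
  have xlc: "continuous_on {0..t1} xl" unfolding xl_def by (intro continuous_intros)
  have K: "compact (xl ` {0..t1})" by (rule compact_continuous_image[OF xlc]) simp
  have KU: "xl ` {0..t1} \<subseteq> U" using inU unfolding xl_def gz_def by auto
  obtain M where M: "M \<ge> 0" "\<And>q h. q \<in> xl ` {0..t1} \<Longrightarrow> norm (Dg q h) \<le> M * norm h"
    using bound[OF K KU] by blast
  define v where "v t = gr (xl t) - exp (- t) *\<^sub>R gz" for t
  define v' where "v' t = Dg (xl t) (- exp (- t) *\<^sub>R gz) + exp (- t) *\<^sub>R gz" for t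
  have dxl: "(xl has_vector_derivative (- exp (- t) *\<^sub>R gz)) (at t)" for t
    unfolding xl_def by (auto intro!: derivative_eq_intros)
  have "\<forall>t\<in>{0..t1}. v t = 0"
  proof (rule gronwall0[OF t1, of "M + 1"])
    show "0 \<le> M + 1" using M by simp
    fix t assume t: "t \<in> {0..t1}"
    have q: "xl t \<in> U" using KU t by auto
    have lin: "linear (Dg (xl t))" using dgr[OF q] has_derivative_linear by blast
    have "(gr \<circ> xl has_vector_derivative Dg (xl t) (- exp (- t) *\<^sub>R gz)) (at t)"
      using vector_derivative_diff_chain_within[OF dxl[of t]]
        has_derivative_at_withinI[OF dgr[OF q]] by blast
    then show "(v has_vector_derivative v' t) (at t)"
      unfolding v_def v'_def o_def
      by (auto intro!: derivative_eq_intros)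
    have "v' t = Dg (xl t) (v t) - v t"
      unfolding v'_def v_def using Dgg[OF q] linear_diff[OF lin] linear_neg[OF lin]
      by (simp add: algebra_simps)
    then have "norm (v' t) \<le> norm (Dg (xl t) (v t)) + norm (v t)"
      by (simp add: norm_triangle_ineq4)
    also have "\<dots> \<le> M * norm (v t) + norm (v t)" using M(2)[of "xl t" "v t"] t by auto
    finally show "norm (v' t) \<le> (M + 1) * norm (v t)" by (simp add: algebra_simps)
  next
    show "v 0 = 0" by (simp add: v_def xl_def gz_def)
  qed
  then show ?thesis by (simp add: v_def xl_def gz_def)
qed

lemma line_stays:
  fixes gr :: "'a::euclidean_space \<Rightarrow> 'a" and Dg :: "'a \<Rightarrow> 'a \<Rightarrow> 'a"
    and ys :: "nat \<Rightarrow> 'a"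
  assumes U: "U = (\<Union>i\<in>{1..N}. ball (ys i) (\<zeta> / 2))"
    and dgr: "\<And>q. q \<in> U \<Longrightarrow> (gr has_derivative Dg q) (at q)"
    and Dgg: "\<And>q. q \<in> U \<Longrightarrow> Dg q (gr q) = gr q"
    and bound: "\<And>K. compact K \<Longrightarrow> K \<subseteq> U \<Longrightarrow> \<exists>M\<ge>0. \<forall>q\<in>K. \<forall>h. norm (Dg q h) \<le> M * norm h"
    and grc: "continuous_on (closure U) gr"
    and bnd: "\<And>x i. x \<in> frontier U \<Longrightarrow> i \<in> {1..N} \<Longrightarrow> dist x (ys i) = \<zeta> / 2 \<Longrightarrow>
                 gr x \<bullet> ((x - ys i) /\<^sub>R norm (x - ys i)) > 0"
    and x0: "x0 \<in> U" and \<zeta>: "\<zeta> > 0"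
  shows "\<forall>t\<ge>0. x0 - (1 - exp (- t)) *\<^sub>R gr x0 \<in> U"
proof (rule ccontr)
  define g0 where "g0 = gr x0"
  define xl where "xl t = x0 - (1 - exp (- t)) *\<^sub>R g0" for t
  define S where "S = {0..} \<inter> xl -` (- U)"
  assume "\<not> (\<forall>t\<ge>0. x0 - (1 - exp (- t)) *\<^sub>R gr x0 \<in> U)"
  then have Sne: "S \<noteq> {}" by (auto simp: S_def xl_def g0_def)
  have oU: "open U" unfolding U by auto
  have xlc: "continuous_on A xl" for A unfolding xl_def by (intro continuous_intros)
  have clS: "closed S" unfolding S_def
    by (rule continuous_closed_preimage[OF xlc]) (use oU in auto)
  have bS: "bdd_below S" unfolding S_def by (auto intro: bdd_belowI[of _ 0])
  define T where "T = Inf S"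
  have TS: "T \<in> S" unfolding T_def using closed_contains_Inf[OF Sne bS clS] .
  then have T0: "T \<ge> 0" and xT: "xl T \<notin> U" by (auto simp: S_def)
  have "T \<noteq> 0" using xT x0 by (auto simp: xl_def)
  with T0 have Tp: "T > 0" by simp
  have before: "xl t \<in> U" if "0 \<le> t" "t < T" for t
  proof (rule ccontr)
    assume "xl t \<notin> U"
    then have "t \<in> S" using that by (auto simp: S_def)
    then have "T \<le> t" unfolding T_def using bS by (rule cInf_lower)
    then show False using that by simp
  qed
  have grT: "gr (xl t) = exp (- t) *\<^sub>R g0" if "0 \<le> t" "t < T" for t
    using line_grad[where z=x0, OF dgr Dgg bound \<open>0 \<le> t\<close>] before that
    unfolding xl_def g0_def by auto
  have evU: "\<forall>\<^sub>F t in at_left T. 0 < t \<and> t < T \<and> xl t \<in> U"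
    using eventually_at_left_real[OF Tp] by eventually_elim (auto intro: before)
  have lim: "(xl \<longlongrightarrow> xl T) (at_left T)"
    using xlc[of UNIV] by (simp add: continuous_on_def filterlim_at_split)
  have xTc: "xl T \<in> closure U"
    by (rule Lim_in_closed_set[OF closed_closure _ trivial_limit_at_left_real lim])
       (use evU in \<open>eventually_elim, auto intro: closure_subset[THEN subsetD]\<close>)
  have xTf: "xl T \<in> frontier U" using xTc xT oU by (simp add: frontier_def interior_open)
  have "((\<lambda>t. gr (xl t)) \<longlongrightarrow> gr (xl T)) (at_left T)"
    by (rule continuous_on_tendsto_compose[OF grc lim xTc])
       (use evU in \<open>eventually_elim, auto intro: closure_subset[THEN subsetD]\<close>)
  moreover have "((\<lambda>t. gr (xl t)) \<longlongrightarrow> exp (- T) *\<^sub>R g0) (at_left T)"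
  proof -
    have "((\<lambda>t. exp (- t) *\<^sub>R g0) \<longlongrightarrow> exp (- T) *\<^sub>R g0) (at_left T)"
      by (intro tendsto_intros)
    then show ?thesis
      by (rule Lim_transform_eventually) (use evU in \<open>eventually_elim, auto simp: grT\<close>)
  qed
  ultimately have grxT: "gr (xl T) = exp (- T) *\<^sub>R g0"
    using tendsto_unique[OF trivial_limit_at_left_real] by blast
  have "\<forall>j\<in>{1..N}. \<forall>\<^sub>F t in at_left T. xl t \<notin> ball (ys j) (\<zeta> / 2)"
  proof
    fix j assume j: "j \<in> {1..N}"
    have "xl T \<notin> ball (ys j) (\<zeta> / 2)" using xT j unfolding U by blast
    then have dge: "dist (ys j) (xl T) \<ge> \<zeta> / 2" by simp
    show "\<forall>\<^sub>F t in at_left T. xl t \<notin> ball (ys j) (\<zeta> / 2)"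
    proof (cases "dist (ys j) (xl T) = \<zeta> / 2")
      case True
      define w where "w = xl T - ys j"
      have nw: "norm w = \<zeta> / 2" using True by (simp add: w_def dist_norm norm_minus_commute)
      have "gr (xl T) \<bullet> (w /\<^sub>R norm w) > 0"
        using bnd[OF xTf j] True unfolding w_def by (simp add: dist_commute)
      then have "(exp (- T) / norm w) * (g0 \<bullet> w) > 0" using grxT by (simp add: divide_inverse mult_ac)
      moreover have "exp (- T) / norm w > 0" using nw \<zeta> by (intro divide_pos_pos) auto
      ultimately have gw: "g0 \<bullet> w > 0" by (metis zero_less_mult_iff mult_less_0_iff less_asym)
      show ?thesis
        using eventually_at_left_real[OF Tp]
      proof eventually_elim
        case (elim t)
        define c where "c = exp (- t) - exp (- T)"
        have c: "c > 0" using elim by (simp add: c_def)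
        have e1: "xl t - ys j = w + c *\<^sub>R g0" by (simp add: xl_def w_def c_def algebra_simps)
        have "(norm (w + c *\<^sub>R g0))^2 = (norm w)^2 + 2 * c * (g0 \<bullet> w) + c^2 * (norm g0)^2"
          unfolding power2_norm_eq_inner
          by (simp add: inner_add_left inner_add_right inner_commute algebra_simps power2_eq_square)
        then have "(norm (xl t - ys j))^2 = (norm w)^2 + 2 * c * (g0 \<bullet> w) + c^2 * (norm g0)^2"
          unfolding e1 .
        also have "\<dots> > (norm w)^2" using c gw by (smt (verit) mult_pos_pos zero_le_power2 mult_nonneg_nonneg)
        finally have "norm w < norm (xl t - ys j)"
          by (smt (verit) norm_ge_zero power_mono)
        then show ?case using nw by (simp add: dist_norm norm_minus_commute)
      qed
    next
      case False
      then have "dist (ys j) (xl T) > \<zeta> / 2" using dge by simp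
      moreover have "((\<lambda>t. dist (ys j) (xl t)) \<longlongrightarrow> dist (ys j) (xl T)) (at_left T)"
        by (intro tendsto_intros lim)
      ultimately have "\<forall>\<^sub>F t in at_left T. dist (ys j) (xl t) > \<zeta> / 2"
        by (rule order_tendstoD(1)[rotated])
      then show ?thesis by eventually_elim auto
    qed
  qed
  then have "\<forall>\<^sub>F t in at_left T. \<forall>j\<in>{1..N}. xl t \<notin> ball (ys j) (\<zeta> / 2)"
    by (intro eventually_ball_finite) auto
  with evU have "\<forall>\<^sub>F t in at_left T. False"
    by eventually_elim (auto simp: U)
  then show False using trivial_limit_at_left_real eventually_happens' by blast
qed

lemma uniq_seg:
  fixes gr G :: "'a::euclidean_space \<Rightarrow> 'a" and Dg :: "'a \<Rightarrow> 'a \<Rightarrow> 'a" and y :: "real \<Rightarrow> 'a"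
  assumes dgr: "\<And>q. q \<in> U \<Longrightarrow> (gr has_derivative Dg q) (at q)"
    and Dgg: "\<And>q. q \<in> U \<Longrightarrow> Dg q (gr q) = gr q"
    and GU: "\<And>q. q \<in> U \<Longrightarrow> G q = gr q"
    and y0: "y 0 = z"
    and yd: "\<And>t. t \<ge> 0 \<Longrightarrow> (y has_vector_derivative - G (y t)) (at t within {0..})"
    and inU: "\<And>t. t \<in> {0..T} \<Longrightarrow> y t \<in> U"
  shows "\<forall>t\<in>{0..T}. y t = z - (1 - exp (- t)) *\<^sub>R gr z"
proof -
  have yd': "(y has_vector_derivative - gr (y t)) (at t within {0..T})" if t: "t \<in> {0..T}" for t
    using has_vector_derivative_within_subset[OF yd[of t]] GU[OF inU[OF t]] t by auto
  define u where "u t = exp t *\<^sub>R gr (y t)" for t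
  have "(u has_vector_derivative 0) (at t within {0..T})" if t: "t \<in> {0..T}" for t
  proof -
    have q: "y t \<in> U" using inU[OF t] .
    have lin: "linear (Dg (y t))" using dgr[OF q] has_derivative_linear by blast
    have "(gr \<circ> y has_vector_derivative Dg (y t) (- gr (y t))) (at t within {0..T})"
      using vector_derivative_diff_chain_within[OF yd'[OF t]]
        has_derivative_at_withinI[OF dgr[OF q]] by blast
    then have "(gr \<circ> y has_vector_derivative - gr (y t)) (at t within {0..T})"
      using Dgg[OF q] linear_neg[OF lin] by simp
    then have "((\<lambda>t. gr (y t)) has_vector_derivative - gr (y t)) (at t within {0..T})"
      by (simp add: o_def)
    then show ?thesis unfolding u_def
      by (auto intro!: derivative_eq_intros)
  qed
  then obtain c where c: "\<And>t. t \<in> {0..T} \<Longrightarrow> u t = c"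
    using has_vector_derivative_zero_constant[of "{0..T}" u] by (metis convex_real_interval(5))
  have grt: "gr (y t) = exp (- t) *\<^sub>R gr z" if t: "t \<in> {0..T}" for t
  proof -
    have "T \<ge> 0" using t by simp
    then have "c = gr z" using c[of 0] by (simp add: u_def y0)
    then have "exp t *\<^sub>R gr (y t) = gr z" using c[OF t] by (simp add: u_def)
    then have "exp (- t) *\<^sub>R (exp t *\<^sub>R gr (y t)) = exp (- t) *\<^sub>R gr z" by simp
    moreover have "exp (- t) *\<^sub>R (exp t *\<^sub>R gr (y t)) = gr (y t)"
      by (simp add: exp_add[symmetric])
    ultimately show ?thesis by simp
  qed
  define d where "d t = y t - (z - (1 - exp (- t)) *\<^sub>R gr z)" for t
  have "(d has_vector_derivative 0) (at t within {0..T})" if t: "t \<in> {0..T}" for t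
  proof -
    have "(d has_vector_derivative (- gr (y t) + exp (- t) *\<^sub>R gr z)) (at t within {0..T})"
      unfolding d_def by (auto intro!: derivative_eq_intros yd'[OF t])
    then show ?thesis using grt[OF t] by simp
  qed
  then obtain c' where c': "\<And>t. t \<in> {0..T} \<Longrightarrow> d t = c'"
    using has_vector_derivative_zero_constant[of "{0..T}" d] by (metis convex_real_interval(5))
  show ?thesis
  proof
    fix t assume t: "t \<in> {0..T}"
    then have "T \<ge> 0" by simp
    then have "c' = 0" using c'[of 0] by (simp add: d_def y0)
    then show "y t = z - (1 - exp (- t)) *\<^sub>R gr z" using c'[OF t] by (simp add: d_def)
  qed
qed

lemma uniq:
  fixes gr G :: "'a::euclidean_space \<Rightarrow> 'a" and Dg :: "'a \<Rightarrow> 'a \<Rightarrow> 'a" and y :: "real \<Rightarrow> 'a"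
  assumes dgr: "\<And>q. q \<in> U \<Longrightarrow> (gr has_derivative Dg q) (at q)"
    and Dgg: "\<And>q. q \<in> U \<Longrightarrow> Dg q (gr q) = gr q"
    and GU: "\<And>q. q \<in> U \<Longrightarrow> G q = gr q"
    and oU: "open U"
    and y0: "y 0 = z"
    and yd: "\<And>t. t \<ge> 0 \<Longrightarrow> (y has_vector_derivative - G (y t)) (at t within {0..})"
    and xin: "\<And>t. t \<ge> 0 \<Longrightarrow> z - (1 - exp (- t)) *\<^sub>R gr z \<in> U"
  shows "\<forall>t\<ge>0. y t = z - (1 - exp (- t)) *\<^sub>R gr z"
proof -
  define xl where "xl t = z - (1 - exp (- t)) *\<^sub>R gr z" for t
  have ycont: "continuous_on {0..} y"
    using has_vector_derivative_continuous[OF yd] continuous_on_eq_continuous_within by auto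
  define S where "S = {0..} \<inter> y -` (- U)"
  have allU: "\<forall>t\<ge>0. y t \<in> U"
  proof (rule ccontr)
    assume "\<not> (\<forall>t\<ge>0. y t \<in> U)"
    then have Sne: "S \<noteq> {}" by (auto simp: S_def)
    have clS: "closed S" unfolding S_def
      by (rule continuous_closed_preimage[OF ycont]) (use oU in auto)
    have bS: "bdd_below S" unfolding S_def by (auto intro: bdd_belowI[of _ 0])
    define T where "T = Inf S"
    have TS: "T \<in> S" unfolding T_def using closed_contains_Inf[OF Sne bS clS] .
    then have T0: "T \<ge> 0" and yT: "y T \<notin> U" by (auto simp: S_def)
    have zU: "z \<in> U" using xin[of 0] by simp
    have "T \<noteq> 0" using yT zU y0 by auto
    with T0 have Tp: "T > 0" by simp
    have before: "y t \<in> U" if "0 \<le> t" "t < T" for t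
    proof (rule ccontr)
      assume "y t \<notin> U"
      then have "t \<in> S" using that by (auto simp: S_def)
      then have "T \<le> t" unfolding T_def using bS by (rule cInf_lower)
      then show False using that by simp
    qed
    have eq: "y t = xl t" if "0 \<le> t" "t < T" for t
      using uniq_seg[where T=t, OF dgr Dgg GU y0 yd] before that unfolding xl_def by auto
    have "(y \<longlongrightarrow> y T) (at T within {0..})"
      using ycont T0 by (simp add: continuous_on_def)
    then have "(y \<longlongrightarrow> y T) (at T within {0..T})"
      by (rule tendsto_within_subset) auto
    then have l1: "(y \<longlongrightarrow> y T) (at_left T)"
      using at_within_Icc_at_left[OF Tp] by simp
    have l2: "(y \<longlongrightarrow> xl T) (at_left T)"
    proof -
      have "(xl \<longlongrightarrow> xl T) (at_left T)" unfolding xl_def by (intro tendsto_intros)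
      then show ?thesis
        by (rule Lim_transform_eventually)
          (use eventually_at_left_real[OF Tp] in \<open>eventually_elim, auto simp: eq\<close>)
    qed
    have "y T = xl T" using tendsto_unique[OF trivial_limit_at_left_real l1 l2] .
    then show False using yT xin[OF T0] by (simp add: xl_def)
  qed
  show ?thesis
  proof (intro allI impI)
    fix t :: real assume "t \<ge> 0"
    then show "y t = z - (1 - exp (- t)) *\<^sub>R gr z"
      using uniq_seg[where T=t, OF dgr Dgg GU y0 yd] allU by auto
  qed
qed

theorem lemmaD2:
  fixes \<zeta> :: real and \<beta> N :: nat and ys :: "nat \<Rightarrow> 'a::euclidean_space"
    and \<eta> :: "'a \<Rightarrow> real" and x0 :: 'a
  assumes "\<zeta> > 0" and "\<beta> \<ge> 2"
    and "classD \<zeta> \<beta> N ys \<eta>"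
    and "x0 \<in> ballunion \<zeta> N ys"
  shows "\<exists>x. neg_grad_flow_sol (ballunion \<zeta> N ys) \<eta> x0 x \<and>
             (\<forall>y. neg_grad_flow_sol (ballunion \<zeta> N ys) \<eta> x0 y \<longrightarrow> (\<forall>t\<ge>0. y t = x t)) \<and>
             (\<forall>t\<ge>0. x t \<in> ballunion \<zeta> N ys)"
proof -
  define U where "U = ballunion \<zeta> N ys"
  have U_eq: "U = (\<Union>i\<in>{1..N}. ball (ys i) (\<zeta> / 2))" by (simp add: U_def ballunion_def)
  have oU: "open U" unfolding U_eq by auto
  have x0: "x0 \<in> U" using assms(4) by (simp add: U_def)
  from assms(3) obtain F where
      F0: "\<forall>x\<in>closure U. F [] x = \<eta> x"
    and Fc: "\<forall>vs. set vs \<subseteq> Basis \<and> length vs \<le> \<beta> \<longrightarrow> continuous_on (closure U) (F vs)"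
    and Fd: "\<forall>vs. set vs \<subseteq> Basis \<and> length vs < \<beta> \<longrightarrow>
         (\<forall>x\<in>U. (F vs has_derivative (\<lambda>h. \<Sum>b\<in>Basis. (h \<bullet> b) * F (b # vs) x)) (at x))"
    and eik: "\<forall>x\<in>U. (norm (ext_grad U \<eta> x))\<^sup>2 = 2 * \<eta> x"
    and bd: "\<exists>\<delta>>0. \<forall>x\<in>frontier U. \<forall>i\<in>{1..N}. dist x (ys i) = \<zeta> / 2 \<longrightarrow>
         ext_grad U \<eta> x \<bullet> ((x - ys i) /\<^sub>R norm (x - ys i)) > \<delta>"
    unfolding classD_def Ck_closure_def U_def by blast
  define gr where "gr q = (\<Sum>b\<in>Basis. F [b] q *\<^sub>R b)" for q
  define Dg where "Dg q h = (\<Sum>b\<in>Basis. (\<Sum>c\<in>Basis. (h \<bullet> c) * F [c, b] q) *\<^sub>R b)" for q h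
  have grh: "gr q \<bullet> h = (\<Sum>b\<in>Basis. (h \<bullet> b) * F [b] q)" for q h
    unfolding gr_def inner_sum_left inner_scaleR_left by (rule sum.cong) (auto simp: inner_commute)
  have deta: "(\<eta> has_derivative (\<lambda>h. gr q \<bullet> h)) (at q)" if q: "q \<in> U" for q
  proof -
    have "(F [] has_derivative (\<lambda>h. \<Sum>b\<in>Basis. (h \<bullet> b) * F [b] q)) (at q)"
      using Fd q by (auto simp: less_le_trans[OF _ assms(2)])
    then have "(\<eta> has_derivative (\<lambda>h. \<Sum>b\<in>Basis. (h \<bullet> b) * F [b] q)) (at q)"
      by (rule has_derivative_transform_within_open[OF _ oU q])
         (use F0 closure_subset in auto)
    then show ?thesis by (simp add: grh)
  qed
  have dgr: "(gr has_derivative Dg q) (at q)" if q: "q \<in> U" for q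
  proof -
    have "(F [b] has_derivative (\<lambda>h. \<Sum>c\<in>Basis. (h \<bullet> c) * F [c, b] q)) (at q)" if b: "b \<in> Basis" for b
      using Fd q b assms(2) by auto
    then have "((\<lambda>q. \<Sum>b\<in>Basis. F [b] q *\<^sub>R b) has_derivative
        (\<lambda>h. \<Sum>b\<in>Basis. (\<Sum>c\<in>Basis. (h \<bullet> c) * F [c, b] q) *\<^sub>R b)) (at q)"
      by (intro has_derivative_sum has_derivative_scaleR_left) auto
    then show ?thesis unfolding gr_def Dg_def by (simp add: fun_eq_iff)
  qed
  have Fc1: "continuous_on (closure U) (F [b])" if "b \<in> Basis" for b
    using Fc assms(2) that by auto
  have Fc2: "continuous_on (closure U) (F [c, b])" if "b \<in> Basis" "c \<in> Basis" for b c
    using Fc assms(2) that by auto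
  have grc: "continuous_on (closure U) gr"
    unfolding gr_def using Fc1 by (auto intro!: continuous_intros)
  have grad_eq: "grad \<eta> q = gr q" if q: "q \<in> U" for q
  proof -
    have ex: "\<exists>g. (\<eta> has_derivative (\<lambda>h. g \<bullet> h)) (at q)" using deta[OF q] by blast
    have "(\<eta> has_derivative (\<lambda>h. grad \<eta> q \<bullet> h)) (at q)"
      unfolding grad_def by (rule someI_ex[OF ex])
    then have "(\<lambda>h. grad \<eta> q \<bullet> h) = (\<lambda>h. gr q \<bullet> h)"
      using deta[OF q] has_derivative_unique by blast
    then have "(grad \<eta> q - gr q) \<bullet> (grad \<eta> q - gr q) = 0"
      by (metis inner_diff_left right_minus_eq)
    then show ?thesis by simp
  qed
  have ext: "ext_grad U \<eta> q = gr q" if q: "q \<in> closure U" for q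
  proof -
    have nb: "at q within U \<noteq> bot"
      using q oU by (simp add: trivial_limit_within) (metis islimpt_closure_open limpt_of_closure)
    have "(gr \<longlongrightarrow> gr q) (at q within closure U)"
      using grc q by (simp add: continuous_on_def)
    then have "(gr \<longlongrightarrow> gr q) (at q within U)"
      by (rule tendsto_within_subset) (rule closure_subset)
    then have "(grad \<eta> \<longlongrightarrow> gr q) (at q within U)"
      by (rule Lim_transform_eventually) (auto simp: eventually_at_filter grad_eq)
    then show ?thesis unfolding ext_grad_def by (rule tendsto_Lim[OF nb])
  qed
  have eik': "gr q \<bullet> gr q = 2 * \<eta> q" if q: "q \<in> U" for q
  proof -
    have "q \<in> closure U" using q closure_subset by blast
    then show ?thesis using eik q ext[of q] by (auto simp: power2_norm_eq_inner)
  qed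
  have DgT: "gr q \<bullet> Dg q h = gr q \<bullet> h" if q: "q \<in> U" for q h
  proof -
    have "((\<lambda>p. gr p \<bullet> gr p) has_derivative (\<lambda>h. gr q \<bullet> Dg q h + Dg q h \<bullet> gr q)) (at q)"
      using has_derivative_inner[OF dgr[OF q] dgr[OF q]] .
    then have 1: "((\<lambda>p. 2 * \<eta> p) has_derivative (\<lambda>h. gr q \<bullet> Dg q h + Dg q h \<bullet> gr q)) (at q)"
      by (rule has_derivative_transform_within_open[OF _ oU q]) (simp add: eik')
    have 2: "((\<lambda>p. 2 * \<eta> p) has_derivative (\<lambda>h. 2 * (gr q \<bullet> h))) (at q)"
      using deta[OF q] by (auto intro!: derivative_eq_intros)
    have "(\<lambda>h. gr q \<bullet> Dg q h + Dg q h \<bullet> gr q) = (\<lambda>h. 2 * (gr q \<bullet> h))"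
      using has_derivative_unique[OF 1 2] .
    then have "gr q \<bullet> Dg q h + Dg q h \<bullet> gr q = 2 * (gr q \<bullet> h)" by metis
    then show ?thesis by (simp add: inner_commute)
  qed
  have Dgg: "Dg q (gr q) = gr q" if q: "q \<in> U" for q
  proof -
    have "h \<bullet> Dg q (gr q) = gr q \<bullet> h" for h
      using hess_sym[OF deta oU q dgr[OF q], of h "gr q"] DgT[OF q, of h] by simp
    then have "(Dg q (gr q) - gr q) \<bullet> h = 0" for h by (simp add: inner_diff_left inner_commute inner_diff_right)
    from this[of "Dg q (gr q) - gr q"] show ?thesis by simp
  qed
  have bound: "\<exists>M\<ge>0. \<forall>q\<in>K. \<forall>h. norm (Dg q h) \<le> M * norm h" if K: "compact K" "K \<subseteq> U" for K
  proof -
    define m where "m q = (\<Sum>b\<in>Basis. \<Sum>c\<in>Basis. \<bar>F [c, b] q\<bar>)" for q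
    have "continuous_on (closure U) m" unfolding m_def using Fc2 by (auto intro!: continuous_intros)
    then have "continuous_on K m" by (rule continuous_on_subset) (use K closure_subset in auto)
    then have "bounded (m ` K)" using K by (intro compact_imp_bounded compact_continuous_image)
    then obtain a where a: "\<forall>q\<in>K. \<bar>m q\<bar> \<le> a" unfolding bounded_real by auto
    show ?thesis
    proof (intro exI[of _ "max a 0"] conjI ballI allI)
      fix q h assume q: "q \<in> K"
      have "norm (Dg q h) \<le> (\<Sum>b\<in>Basis. norm ((\<Sum>c\<in>Basis. (h \<bullet> c) * F [c, b] q) *\<^sub>R b))"
        unfolding Dg_def by (rule norm_sum)
      also have "\<dots> = (\<Sum>b\<in>Basis. \<bar>\<Sum>c\<in>Basis. (h \<bullet> c) * F [c, b] q\<bar>)" by simp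
      also have "\<dots> \<le> (\<Sum>b\<in>Basis. \<Sum>c\<in>Basis. norm h * \<bar>F [c, b] q\<bar>)"
      proof (intro sum_mono)
        fix b :: 'a assume "b \<in> Basis"
        have "\<bar>\<Sum>c\<in>Basis. (h \<bullet> c) * F [c, b] q\<bar> \<le> (\<Sum>c\<in>Basis. \<bar>(h \<bullet> c) * F [c, b] q\<bar>)"
          by (rule sum_abs)
        also have "\<dots> \<le> (\<Sum>c\<in>Basis. norm h * \<bar>F [c, b] q\<bar>)"
          by (intro sum_mono) (auto simp: abs_mult intro!: mult_right_mono Basis_le_norm)
        finally show "\<bar>\<Sum>c\<in>Basis. (h \<bullet> c) * F [c, b] q\<bar> \<le> (\<Sum>c\<in>Basis. norm h * \<bar>F [c, b] q\<bar>)" .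
      qed
      also have "\<dots> = norm h * m q" by (simp add: m_def sum_distrib_left)
      also have "\<dots> \<le> norm h * max a 0" using a q by (intro mult_left_mono) auto
      finally show "norm (Dg q h) \<le> max a 0 * norm h" by (simp add: mult.commute)
    qed simp
  qed
  have bnd: "gr x \<bullet> ((x - ys i) /\<^sub>R norm (x - ys i)) > 0"
    if "x \<in> frontier U" "i \<in> {1..N}" "dist x (ys i) = \<zeta> / 2" for x i
  proof -
    obtain \<delta> where "\<delta> > 0" and h: "\<forall>x\<in>frontier U. \<forall>i\<in>{1..N}. dist x (ys i) = \<zeta> / 2 \<longrightarrow>
         ext_grad U \<eta> x \<bullet> ((x - ys i) /\<^sub>R norm (x - ys i)) > \<delta>" using bd by blast
    have "x \<in> closure U" using that(1) by (simp add: frontier_def)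
    then show ?thesis using h that \<open>\<delta> > 0\<close> ext by force
  qed
  define x where "x t = x0 - (1 - exp (- t)) *\<^sub>R gr x0" for t
  have xU: "\<forall>t\<ge>0. x t \<in> U"
    unfolding x_def by (rule line_stays[OF U_eq dgr Dgg bound grc bnd x0 assms(1)])
  have xg: "gr (x t) = exp (- t) *\<^sub>R gr x0" if t: "t \<ge> 0" for t
    using line_grad[where z=x0 and U=U, OF dgr Dgg bound t] xU t unfolding x_def by auto
  have sol: "neg_grad_flow_sol U \<eta> x0 x"
    unfolding neg_grad_flow_sol_def
  proof (intro conjI allI impI)
    show "x 0 = x0" by (simp add: x_def)
    fix t :: real assume t: "t \<ge> 0"
    show "x t \<in> closure U" using xU t closure_subset by auto
    have "ext_grad U \<eta> (x t) = exp (- t) *\<^sub>R gr x0"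
      using ext[of "x t"] xU t closure_subset xg[OF t] by auto
    moreover have "(x has_vector_derivative - (exp (- t) *\<^sub>R gr x0)) (at t within {0..})"
      unfolding x_def by (auto intro!: derivative_eq_intros)
    ultimately show "(x has_vector_derivative - ext_grad U \<eta> (x t)) (at t within {0..})" by simp
  qed
  have un: "\<forall>t\<ge>0. y t = x t" if y: "neg_grad_flow_sol U \<eta> x0 y" for y
  proof -
    have y0: "y 0 = x0" and yd: "\<And>t. t \<ge> 0 \<Longrightarrow> (y has_vector_derivative - ext_grad U \<eta> (y t)) (at t within {0..})"
      using y unfolding neg_grad_flow_sol_def by auto
    have GU: "ext_grad U \<eta> q = gr q" if "q \<in> U" for q using ext that closure_subset by auto
    show ?thesis
      using uniq[where z=x0 and U=U, OF dgr Dgg GU oU y0 yd] xU unfolding x_def by auto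
  qed
  show ?thesis using sol un xU unfolding U_def by blast
qed

end
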